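(* Let $\mathscr{V}\subseteq\mathfrak{B}(\mathcal{H})$ be a linear subspace with ${\rm supp}(\mathscr{V})=\mathcal{H}$, let $\rho$ be a positive definite operator with $\rho\sim{\rm alg}(\mathcal{D}_\rho^{-1}(\mathscr{V}))$, and let $\sigma$ be another positive definite operator. If $\mathcal{D}_\rho^{-1}(\sigma)\in{\rm alg}(\mathcal{D}_\rho^{-1}(\mathscr{V}))$, then $${\rm alg}\big(\mathcal{D}_\sigma^{-1}(\mathscr{V})\big)\subseteq\mathcal{D}_\sigma^{-1}\big({\rm alg}_\rho(\mathscr{V})\big).$$
   Context: $\mathcal{H}$ finite-dimensional complex Hilbert space, $\mathfrak{B}(\mathcal{H})$ its linear operators. A $*$-algebra is a linear subspace of $\mathfrak{B}(\mathcal{H})$ closed under products and adjoints; ${\rm alg}(\mathcal{S})$ is the smallest $*$-algebra containing $\mathcal{S}$. ${\rm supp}(X)=(\ker X)^\perp$, ${\rm supp}(\mathcal{S})=\sum_{X\in\mathcal{S}}{\rm supp}(X)$. For positive definite $\rho$, $\mathcal{D}_\rho(X)=\rho^{1/2}X\rho^{1/2}$, $\mathcal{D}_\rho^{-1}(X)=\rho^{-1/2}X\rho^{-1/2}$. A $\rho$-distorted algebra is a linear subspace closed under adjoints and the product $X\cdot_\rho Y=X\rho^{-1}Y$; ${\rm alg}_\rho(\mathcal{S})$ is the smallest one containing $\mathcal{S}$. Wedderburn decomposition of a unital $*$-algebra $\mathscr{A}$: unitary $U$, $\mathcal{H}\cong\bigoplus_l\mathcal{H}_{S,l}\otimes\mathcal{H}_{F,l}$,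 $\mathscr{A}=U(\bigoplus_l\mathfrak{B}(\mathcal{H}_{S,l})\otimes I_{F,l})U^\dagger$. Compatibility: $\rho\sim\mathscr{A}$ if for some Wedderburn decomposition of $\mathscr{A}$, $\rho=U(\bigoplus_l\rho_{S,l}\otimes\tau_{F,l})U^\dagger$ with $\rho_{S,l}\in\mathfrak{B}(\mathcal{H}_{S,l})$, $\tau_{F,l}\in\mathfrak{B}(\mathcal{H}_{F,l})$. *)

theory Defs
  imports "HOL-Analysis.Analysis"
begin

text \<open>The Hilbert space H is complex^'n (with the standard inner product) for an
 arbitrary finite type 'n; operators are matrices complex^'n^'n.\<close>

type_synonym 'n cmat = "complex ^ 'n ^ 'n"

definition cinner :: "complex ^ 'n \<Rightarrow> complex ^ 'n \<Rightarrow> complex" where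
  "cinner x y = (\<Sum>i\<in>UNIV. cnj (x $ i) * y $ i)"

definition adj :: "'n::finite cmat \<Rightarrow> 'n cmat" where
  "adj A = (\<chi> i j. cnj (A $ j $ i))"

definition csmult :: "complex \<Rightarrow> 'n::finite cmat \<Rightarrow> 'n cmat" where
  "csmult c A = (\<chi> i j. c * A $ i $ j)"

definition op_subspace :: "'n::finite cmat set \<Rightarrow> bool" where
  "op_subspace S \<longleftrightarrow> 0 \<in> S \<and> (\<forall>X\<in>S. \<forall>Y\<in>S. X + Y \<in> S) \<and> (\<forall>c. \<forall>X\<in>S. csmult c X \<in> S)"

definition vec_subspace :: "(complex ^ 'n) set \<Rightarrow> bool" where
  "vec_subspace W \<longleftrightarrow> 0 \<in> W \<and> (\<forall>x\<in>W. \<forall>y\<in>W. x + y \<in> W) \<and> (\<forall>(c::complex). \<forall>x\<in>W. c *s x \<in> W)"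

definition star_algebra :: "'n::finite cmat set \<Rightarrow> bool" where
  "star_algebra S \<longleftrightarrow> op_subspace S \<and> (\<forall>X\<in>S. \<forall>Y\<in>S. X ** Y \<in> S) \<and> (\<forall>X\<in>S. adj X \<in> S)"

definition alg :: "'n::finite cmat set \<Rightarrow> 'n cmat set" where
  "alg S = \<Inter>{A. star_algebra A \<and> S \<subseteq> A}"

definition supp :: "'n::finite cmat \<Rightarrow> (complex ^ 'n) set" where
  "supp X = {y. \<forall>x. X *v x = 0 \<longrightarrow> cinner x y = 0}"

definition supp_set :: "'n::finite cmat set \<Rightarrow> (complex ^ 'n) set" where
  "supp_set S = \<Inter>{W. vec_subspace W \<and> (\<forall>X\<in>S. supp X \<subseteq> W)}"

definition pos_semidef :: "'n::finite cmat \<Rightarrow> bool" where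
  "pos_semidef A \<longleftrightarrow> (\<forall>x. cinner x (A *v x) \<in> \<real> \<and> 0 \<le> Re (cinner x (A *v x)))"

definition pos_def :: "'n::finite cmat \<Rightarrow> bool" where
  "pos_def A \<longleftrightarrow> adj A = A \<and> (\<forall>x. x \<noteq> 0 \<longrightarrow> cinner x (A *v x) \<in> \<real> \<and> 0 < Re (cinner x (A *v x)))"

definition msqrt :: "'n::finite cmat \<Rightarrow> 'n cmat" where
  "msqrt A = (THE R. pos_semidef R \<and> R ** R = A)"

definition D :: "'n::finite cmat \<Rightarrow> 'n cmat \<Rightarrow> 'n cmat" where
  "D \<rho> X = msqrt \<rho> ** X ** msqrt \<rho>"

definition Dinv :: "'n::finite cmat \<Rightarrow> 'n cmat \<Rightarrow> 'n cmat" where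
  "Dinv \<rho> X = matrix_inv (msqrt \<rho>) ** X ** matrix_inv (msqrt \<rho>)"

definition distorted_algebra :: "'n::finite cmat \<Rightarrow> 'n cmat set \<Rightarrow> bool" where
  "distorted_algebra \<rho> S \<longleftrightarrow> op_subspace S \<and> (\<forall>X\<in>S. adj X \<in> S)
     \<and> (\<forall>X\<in>S. \<forall>Y\<in>S. X ** matrix_inv \<rho> ** Y \<in> S)"

definition alg_rho :: "'n::finite cmat \<Rightarrow> 'n cmat set \<Rightarrow> 'n cmat set" where
  "alg_rho \<rho> S = \<Inter>{A. distorted_algebra \<rho> A \<and> S \<subseteq> A}"

definition unitary :: "'n::finite cmat \<Rightarrow> bool" where
  "unitary U \<longleftrightarrow> U ** adj U = mat 1 \<and> adj U ** U = mat 1"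

text \<open>Block operators: the index set 'n is identified (via phi) with the set of
 triples (l,s,f), l < L, s < dS l, f < dF l, i.e. H = (+)_l H_{S,l} (x) H_{F,l}
 with dim H_{S,l} = dS l, dim H_{F,l} = dF l.  blockop phi a b is (+)_l a_l (x) b_l.\<close>
definition blockop :: "('n::finite \<Rightarrow> nat \<times> nat \<times> nat) \<Rightarrow> (nat \<Rightarrow> nat \<Rightarrow> nat \<Rightarrow> complex)
     \<Rightarrow> (nat \<Rightarrow> nat \<Rightarrow> nat \<Rightarrow> complex) \<Rightarrow> 'n cmat" where
  "blockop \<phi> a b = (\<chi> i j. (case \<phi> i of (l, s, f) \<Rightarrow> case \<phi> j of (l', s', f') \<Rightarrow>
       if l = l' then a l s s' * b l f f' else 0))"

definition decomp_index :: "('n::finite \<Rightarrow> nat \<times> nat \<times> nat) \<Rightarrow> nat \<Rightarrow> (nat \<Rightarrow> nat) \<Rightarrow> (nat \<Rightarrow> nat) \<Rightarrow> bool" where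
  "decomp_index \<phi> L dS dF \<longleftrightarrow> (\<forall>l<L. 0 < dS l \<and> 0 < dF l)
     \<and> bij_betw \<phi> UNIV {(l, s, f). l < L \<and> s < dS l \<and> f < dF l}"

definition wedderburn :: "'n::finite cmat set \<Rightarrow> 'n cmat \<Rightarrow> ('n \<Rightarrow> nat \<times> nat \<times> nat)
     \<Rightarrow> nat \<Rightarrow> (nat \<Rightarrow> nat) \<Rightarrow> (nat \<Rightarrow> nat) \<Rightarrow> bool" where
  "wedderburn A U \<phi> L dS dF \<longleftrightarrow> unitary U \<and> decomp_index \<phi> L dS dF
     \<and> A = {U ** blockop \<phi> a (\<lambda>l f f'. if f = f' then 1 else 0) ** adj U | a. True}"

definition compatible :: "'n::finite cmat \<Rightarrow> 'n cmat set \<Rightarrow> bool" where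
  "compatible \<rho> A \<longleftrightarrow> (\<exists>U \<phi> L dS dF. wedderburn A U \<phi> L dS dF
     \<and> (\<exists>r t. \<rho> = U ** blockop \<phi> r t ** adj U))"

end

theory Submission
  imports Defs
begin


lemma matrix_inv_props:
  assumes "invertible A"
  shows "A ** matrix_inv A = mat 1" "matrix_inv A ** A = mat 1"
proof -
  have "\<exists>A'. A ** A' = mat 1 \<and> A' ** A = mat 1" using assms unfolding invertible_def .
  hence "A ** matrix_inv A = mat 1 \<and> matrix_inv A ** A = mat 1"
    unfolding matrix_inv_def by (rule someI_ex)
  thus "A ** matrix_inv A = mat 1" "matrix_inv A ** A = mat 1" by auto
qed

lemma invertible_matrix_inv: "invertible A \<Longrightarrow> invertible (matrix_inv A)"
  using matrix_inv_props unfolding invertible_def by blast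

lemma inv_unique_left: "B ** A = mat 1 \<Longrightarrow> invertible A \<Longrightarrow> B = matrix_inv A"
  by (metis matrix_inv_props(1) matrix_mul_assoc matrix_mul_lid matrix_mul_rid)

lemma inv_unique_right: "A ** B = mat 1 \<Longrightarrow> invertible A \<Longrightarrow> B = matrix_inv A"
  by (metis matrix_inv_props(2) matrix_mul_assoc matrix_mul_lid matrix_mul_rid)

lemma cinner_add_right: "cinner x (y + z) = cinner x y + cinner x z"
  by (simp add: cinner_def distrib_left sum.distrib)
lemma cinner_add_left: "cinner (x + y) z = cinner x z + cinner y z"
  by (simp add: cinner_def distrib_right sum.distrib)
lemma cinner_diff_right: "cinner x (y - z) = cinner x y - cinner x z"
  by (simp add: cinner_def right_diff_distrib sum_subtractf)
lemma cinner_diff_left: "cinner (x - y) z = cinner x z - cinner y z"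
  by (simp add: cinner_def left_diff_distrib sum_subtractf)
lemma cinner_scale_right: "cinner x (c *s y) = c * cinner x y"
  by (simp add: cinner_def sum_distrib_left algebra_simps)
lemma cinner_scale_left: "cinner (c *s x) y = cnj c * cinner x y"
  by (simp add: cinner_def sum_distrib_left algebra_simps)
lemma cinner_zero_right[simp]: "cinner x 0 = 0" by (simp add: cinner_def)
lemma cinner_zero_left[simp]: "cinner 0 x = 0" by (simp add: cinner_def)
lemma cinner_sym: "cinner y x = cnj (cinner x y)"
  by (simp add: cinner_def mult.commute)
lemma cinner_sum_right: "cinner x (sum f S) = (\<Sum>u\<in>S. cinner x (f u))"
  by (induction S rule: infinite_finite_induct) (auto simp: cinner_add_right)
lemma cinner_sum_left: "cinner (sum f S) x = (\<Sum>u\<in>S. cinner (f u) x)"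
  by (induction S rule: infinite_finite_induct) (auto simp: cinner_add_left)

lemma cinner_self: "cinner x x = complex_of_real ((norm x)^2)"
proof -
  have "cinner x x = (\<Sum>i\<in>UNIV. complex_of_real ((norm (x$i))^2))"
    unfolding cinner_def by (intro sum.cong refl) (metis complex_norm_square mult.commute of_real_power)
  also have "\<dots> = complex_of_real (\<Sum>i\<in>UNIV. (norm (x$i))^2)" by simp
  also have "(\<Sum>i\<in>UNIV. (norm (x$i))^2) = (norm x)^2"
    by (simp add: norm_vec_def L2_set_def sum_nonneg)
  finally show ?thesis .
qed

lemma cinner_self_eq0: "cinner x x = 0 \<longleftrightarrow> x = 0"
  by (simp add: cinner_self)

lemma re_cinner_self: "Re (cinner x x) = (norm x)^2" by (simp add: cinner_self)

lemma adj_adj[simp]: "adj (adj A) = A" by (simp add: adj_def vec_eq_iff)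
lemma adj_mult: "adj (A ** B) = adj B ** adj A"
  by (simp add: adj_def matrix_matrix_mult_def vec_eq_iff mult.commute)
lemma adj_add: "adj (A + B) = adj A + adj B" by (simp add: adj_def vec_eq_iff)
lemma adj_zero[simp]: "adj 0 = 0" by (simp add: adj_def vec_eq_iff)
lemma adj_one[simp]: "adj (mat 1) = mat 1" by (simp add: adj_def vec_eq_iff mat_def)
lemma adj_csmult: "adj (csmult c A) = csmult (cnj c) (adj A)"
  by (simp add: adj_def csmult_def vec_eq_iff)

lemma cinner_adj: "cinner x (A *v y) = cinner (adj A *v x) y"
proof -
  have "cinner x (A *v y) = (\<Sum>i\<in>UNIV. \<Sum>j\<in>UNIV. cnj (x$i) * A$i$j * y$j)"
    by (simp add: cinner_def matrix_vector_mult_def sum_distrib_left mult.assoc)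
  also have "\<dots> = (\<Sum>j\<in>UNIV. \<Sum>i\<in>UNIV. cnj (x$i) * A$i$j * y$j)" by (rule sum.swap)
  also have "\<dots> = cinner (adj A *v x) y"
    by (simp add: cinner_def matrix_vector_mult_def adj_def sum_distrib_left cnj_sum mult_ac)
  finally show ?thesis .
qed

lemma csmult_mult_left: "csmult c A ** B = csmult c (A ** B)"
  by (simp add: csmult_def matrix_matrix_mult_def vec_eq_iff sum_distrib_left mult_ac)
lemma csmult_mult_right: "A ** csmult c B = csmult c (A ** B)"
  by (simp add: csmult_def matrix_matrix_mult_def vec_eq_iff sum_distrib_left mult_ac)
lemma scaleR_csmult: "c *\<^sub>R A = csmult (complex_of_real c) A"
  by (simp add: csmult_def vec_eq_iff complex_eq_iff)

lemma adj_inv: "invertible A \<Longrightarrow> adj (matrix_inv A) = matrix_inv (adj A)"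
proof -
  assume A: "invertible A"
  have "adj (matrix_inv A) ** adj A = mat 1"
    using matrix_inv_props(1)[OF A] by (metis adj_mult adj_one)
  moreover have "invertible (adj A)"
    using matrix_inv_props[OF A] unfolding invertible_def by (metis adj_mult adj_one)
  ultimately show ?thesis by (rule inv_unique_left)
qed



lemma scaleR_vec_smult: "(c::real) *\<^sub>R (x::complex^'n) = complex_of_real c *s x"
  by (simp add: vec_eq_iff complex_eq_iff)

lemma inner_cinner: "inner (x::complex^'n) y = Re (cinner x y)"
  by (simp add: inner_vec_def cinner_def inner_complex_def Re_sum)

lemma cont_cinner_right: "continuous_on S (\<lambda>y. cinner a y)"
  unfolding cinner_def by (intro continuous_intros)

lemma cont_quad: "continuous_on S (\<lambda>y. Re (cinner y (A *v y)))"
  unfolding cinner_def matrix_vector_mult_def by (simp; intro continuous_intros)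

definition eigsys :: "'n::finite cmat \<Rightarrow> (complex^'n) set \<Rightarrow> (complex^'n \<Rightarrow> real) \<Rightarrow> bool" where
  "eigsys A S lam \<longleftrightarrow> (\<forall>u\<in>S. cinner u u = 1 \<and> A *v u = complex_of_real (lam u) *s u)
      \<and> (\<forall>u\<in>S. \<forall>w\<in>S. u \<noteq> w \<longrightarrow> cinner u w = 0)"

lemma eigsys_bound:
  fixes A :: "'n::finite cmat"
  assumes "eigsys A S lam"
  shows "finite S \<and> card S \<le> DIM(complex^'n::finite)"
proof -
  have "pairwise orthogonal S" using assms
    by (auto simp: pairwise_def orthogonal_def inner_cinner eigsys_def)
  moreover have "0 \<notin> S" using assms by (auto simp: eigsys_def)
  ultimately have "independent S" by (rule pairwise_orthogonal_independent)
  thus ?thesis using independent_bound[of S] by simp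
qed

lemma eig_exists:
  fixes A :: "'n::finite cmat"
  assumes herm: "adj A = A"
    and S: "\<forall>u\<in>S. A *v u = complex_of_real (lam u) *s u"
    and x: "\<forall>u\<in>S. cinner u x = 0" "x \<noteq> 0"
  shows "\<exists>v \<mu>. (\<forall>u\<in>S. cinner u v = 0) \<and> cinner v v = 1 \<and> A *v v = complex_of_real \<mu> *s v"
proof -
  define W where "W = {y. \<forall>u\<in>S. cinner u y = 0}"
  have Wsub: "subspace W"
    unfolding subspace_def W_def
    by (auto simp: cinner_add_right scaleR_vec_smult cinner_scale_right)
  have Wsc: "c *s y \<in> W" if "y \<in> W" for c y using that
    by (auto simp: W_def cinner_scale_right)
  have Wadd: "y + z \<in> W" if "y \<in> W" "z \<in> W" for y z using that
    by (auto simp: W_def cinner_add_right)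
  have WA: "A *v y \<in> W" if "y \<in> W" for y
  proof -
    { fix u assume u: "u \<in> S"
      have "cinner u (A *v y) = cinner (A *v u) y" using cinner_adj[of u A y] herm by simp
      also have "\<dots> = 0" using S u that by (simp add: cinner_scale_left W_def)
      finally have "cinner u (A *v y) = 0" . }
    thus ?thesis by (simp add: W_def)
  qed
  define K where "K = W \<inter> sphere 0 1"
  have "compact K" unfolding K_def
    by (intro closed_Int_compact closed_subspace Wsub compact_sphere)
  have xW: "x \<in> W" using x by (simp add: W_def)
  have "(1 / norm x) *\<^sub>R x \<in> K" using x xW Wsub
    by (auto simp: K_def subspace_def)
  hence "K \<noteq> {}" by auto
  define f where "f y = Re (cinner y (A *v y))" for y
  have "continuous_on K f" unfolding f_def by (rule cont_quad)
  then obtain v where vK: "v \<in> K" and vmax: "\<forall>y\<in>K. f y \<le> f v"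
    using continuous_attains_sup[OF \<open>compact K\<close> \<open>K \<noteq> {}\<close>] by blast
  define \<mu> where "\<mu> = f v"
  have vW: "v \<in> W" and nv: "norm v = 1" using vK by (auto simp: K_def)
  have vv: "cinner v v = 1" using nv by (simp add: cinner_self)
  have fscale: "f (c *\<^sub>R y) = c^2 * f y" for c y
    by (simp add: f_def scaleR_vec_smult cinner_scale_left cinner_scale_right vector_scalar_commute power2_eq_square)
  have bound: "f y \<le> \<mu> * (norm y)^2" if "y \<in> W" for y
  proof (cases "y = 0")
    case True thus ?thesis by (simp add: f_def)
  next
    case False
    have "(1 / norm y) *\<^sub>R y \<in> K" using False that Wsub by (auto simp: K_def subspace_def)
    hence "f ((1 / norm y) *\<^sub>R y) \<le> \<mu>" using vmax \<mu>_def by auto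
    hence "f y / (norm y)^2 \<le> \<mu>" by (simp add: fscale power_divide)
    thus ?thesis using False by (simp add: divide_le_eq mult.commute)
  qed
  define z where "z = A *v v - complex_of_real \<mu> *s v"
  have Wdiff: "y - w \<in> W" if "y \<in> W" "w \<in> W" for y w using that
    by (auto simp: W_def cinner_diff_right)
  have zW: "z \<in> W" unfolding z_def using WA[OF vW] Wsc[OF vW] by (rule Wdiff)
  have Avz: "cinner v (A *v z) = cinner (A *v v) z" using cinner_adj[of v A z] herm by simp
  have zz: "cinner z (A *v v) - complex_of_real \<mu> * cinner z v = cinner z z"
    by (simp add: z_def cinner_diff_right cinner_scale_right)
  have zz2: "cinner (A *v v) z - complex_of_real \<mu> * cinner v z = cinner z z"
    by (simp add: z_def cinner_diff_left cinner_scale_left)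
  define n where "n = Re (cinner z z)"
  define c where "c = Re (cinner z (A *v z)) - \<mu> * n"
  have expand: "f (v + complex_of_real t *s z) - \<mu> * (norm (v + complex_of_real t *s z))^2
        = 2 * t * n + t^2 * c" for t
  proof -
    have e1: "cinner (v + complex_of_real t *s z) (A *v (v + complex_of_real t *s z))
       = cinner v (A *v v) + complex_of_real t * (cinner v (A *v z) + cinner z (A *v v))
         + complex_of_real t ^ 2 * cinner z (A *v z)"
      by (simp add: cinner_add_left cinner_add_right cinner_scale_left cinner_scale_right
            matrix_vector_right_distrib vector_scalar_commute algebra_simps power2_eq_square)
    have e2: "cinner (v + complex_of_real t *s z) (v + complex_of_real t *s z)
       = cinner v v + complex_of_real t * (cinner v z + cinner z v)
         + complex_of_real t ^ 2 * cinner z z"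
      by (simp add: cinner_add_left cinner_add_right cinner_scale_left cinner_scale_right
             algebra_simps power2_eq_square)
    have "f (v + complex_of_real t *s z) - \<mu> * (norm (v + complex_of_real t *s z))^2
       = Re (cinner (v + complex_of_real t *s z) (A *v (v + complex_of_real t *s z)))
         - \<mu> * Re (cinner (v + complex_of_real t *s z) (v + complex_of_real t *s z))"
      by (simp add: f_def re_cinner_self)
    also have "\<dots> = (f v - \<mu> * Re (cinner v v))
        + t * (Re (cinner v (A *v z)) + Re (cinner z (A *v v)) - \<mu> * (Re (cinner v z) + Re (cinner z v)))
        + t^2 * c"
      unfolding e1 e2 c_def n_def f_def
      by (simp add: algebra_simps power2_eq_square)
    also have "f v - \<mu> * Re (cinner v v) = 0" using vv \<mu>_def by simp
    also have "Re (cinner v (A *v z)) + Re (cinner z (A *v v)) - \<mu> * (Re (cinner v z) + Re (cinner z v))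
       = Re (cinner z (A *v v) - complex_of_real \<mu> * cinner z v)
         + Re (cinner (A *v v) z - complex_of_real \<mu> * cinner v z)"
      using Avz by (simp add: algebra_simps)
    also have "\<dots> = 2 * n" unfolding zz zz2 n_def by simp
    finally show ?thesis by simp
  qed
  have le: "2 * t * n + t^2 * c \<le> 0" for t
  proof -
    have "v + complex_of_real t *s z \<in> W" using vW zW Wsc Wadd by blast
    from bound[OF this] show ?thesis using expand[of t] by (simp add: f_def)
  qed
  have n0: "n \<ge> 0" by (simp add: n_def re_cinner_self)
  have "n \<le> 0"
  proof (rule ccontr)
    assume "\<not> n \<le> 0"
    hence np: "n > 0" by simp
    define t where "t = n / (\<bar>c\<bar> + 1)"
    have tp: "t > 0" using np by (simp add: t_def add_pos_nonneg)
    have "2 * t * n + t^2 * c \<le> 0" by (rule le)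
    hence "t * (2 * n + t * c) \<le> 0" by (simp add: algebra_simps power2_eq_square)
    hence h: "2 * n + t * c \<le> 0" using tp by (simp add: mult_le_0_iff)
    have "t * \<bar>c\<bar> \<le> n" unfolding t_def using np
      by (simp add: divide_le_eq mult.commute mult_left_mono)
    moreover have "t * (- \<bar>c\<bar>) \<le> t * c"
      by (rule mult_left_mono) (use tp in auto)
    ultimately show False using h np by linarith
  qed
  hence "n = 0" using n0 by simp
  hence "z = 0" by (simp add: n_def re_cinner_self)
  hence "A *v v = complex_of_real \<mu> *s v" by (simp add: z_def)
  thus ?thesis using vW vv by (auto simp: W_def)
qed



lemma spectral:
  fixes A :: "'n::finite cmat"
  assumes herm: "adj A = A"
  shows "\<exists>S lam. eigsys A S lam \<and> finite S \<and> (\<forall>x. x = (\<Sum>u\<in>S. cinner u x *s u))"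
proof -
  define P where "P k = (\<exists>S lam. eigsys A S lam \<and> card S = k)" for k
  have "P 0" unfolding P_def by (rule exI[of _ "{}"]) (simp add: eigsys_def)
  moreover have "\<forall>k. P k \<longrightarrow> k \<le> DIM(complex^'n)"
    unfolding P_def using eigsys_bound by blast
  ultimately obtain k where Pk: "P k" and kmax: "\<forall>j. P j \<longrightarrow> j \<le> k"
    using Nat.ex_has_greatest_nat[of P 0 "DIM(complex^'n)"] by blast
  then obtain S lam where es: "eigsys A S lam" and cS: "card S = k" unfolding P_def by blast
  have fin: "finite S" using eigsys_bound[OF es] by blast
  have ortho: "cinner w (\<Sum>u\<in>S. c u *s u) = c w" if "w \<in> S" for w c
  proof -
    have "cinner w (\<Sum>u\<in>S. c u *s u) = (\<Sum>u\<in>S. c u * cinner w u)"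
      by (simp add: cinner_sum_right cinner_scale_right)
    also have "\<dots> = (\<Sum>u\<in>S. if w = u then c w else 0)"
      using es that by (intro sum.cong refl) (auto simp: eigsys_def)
    also have "\<dots> = c w" using fin that by simp
    finally show ?thesis .
  qed
  have "x = (\<Sum>u\<in>S. cinner u x *s u)" for x
  proof (rule ccontr)
    assume ne: "x \<noteq> (\<Sum>u\<in>S. cinner u x *s u)"
    define y where "y = x - (\<Sum>u\<in>S. cinner u x *s u)"
    have y0: "y \<noteq> 0" using ne by (simp add: y_def)
    have yS: "\<forall>u\<in>S. cinner u y = 0"
      using ortho by (simp add: y_def cinner_diff_right)
    have "\<forall>u\<in>S. A *v u = complex_of_real (lam u) *s u" using es by (simp add: eigsys_def)
    from eig_exists[OF herm this yS y0] obtain v \<mu> where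
      v: "\<forall>u\<in>S. cinner u v = 0" "cinner v v = 1" "A *v v = complex_of_real \<mu> *s v" by blast
    have vS: "v \<notin> S" using v by force
    have vu: "\<forall>u\<in>S. cinner v u = 0" using v(1) by (metis cinner_sym complex_cnj_zero)
    have "eigsys A (insert v S) (lam(v := \<mu>))"
      using es v vS vu unfolding eigsys_def
      by auto
    hence "P (Suc k)" unfolding P_def using vS fin cS by (intro exI[of _ "insert v S"]) auto
    thus False using kmax by fastforce
  qed
  thus ?thesis using es fin by blast
qed

lemma cinner_neg_right: "cinner x (- y) = - cinner x y"
  by (simp add: cinner_def sum_negf)

lemma rank1_mv:
  assumes "finite S"
  shows "(\<chi> a b. \<Sum>u\<in>S. g u * u$a * cnj (u$b)) *v x = (\<Sum>u\<in>S. (g u * cinner u x) *s u)"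
proof -
  { fix a
    have "((\<chi> a b. \<Sum>u\<in>S. g u * u$a * cnj (u$b)) *v x) $ a
        = (\<Sum>b\<in>UNIV. \<Sum>u\<in>S. g u * u$a * cnj (u$b) * x$b)"
      by (simp add: matrix_vector_mult_def sum_distrib_right)
    also have "\<dots> = (\<Sum>u\<in>S. \<Sum>b\<in>UNIV. g u * u$a * cnj (u$b) * x$b)"
      by (rule sum.swap)
    also have "\<dots> = (\<Sum>u\<in>S. (g u * cinner u x) * u$a)"
      by (intro sum.cong refl) (simp add: cinner_def sum_distrib_left mult_ac)
    also have "\<dots> = (\<Sum>u\<in>S. (g u * cinner u x) *s u) $ a"
      by (simp add: sum_component)
    finally have "((\<chi> a b. \<Sum>u\<in>S. g u * u$a * cnj (u$b)) *v x) $ a = (\<Sum>u\<in>S. (g u * cinner u x) *s u) $ a" . }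
  thus ?thesis by (simp add: vec_eq_iff)
qed

lemma pd_invertible:
  assumes "pos_def A" shows "invertible A"
proof -
  have "\<forall>x. A *v x = 0 \<longrightarrow> x = 0" using assms unfolding pos_def_def by force
  thus ?thesis by (simp add: invertible_left_inverse matrix_left_invertible_injective vec.inj_iff_eq_0)
qed

lemma msqrt_props:
  fixes A :: "'n::finite cmat"
  assumes pd: "pos_def A"
  shows "msqrt A ** msqrt A = A" "adj (msqrt A) = msqrt A" "invertible (msqrt A)"
proof -
  have herm: "adj A = A" using pd by (simp add: pos_def_def)
  obtain S lam where es: "eigsys A S lam" and fin: "finite S"
    and comp: "\<forall>x. x = (\<Sum>u\<in>S. cinner u x *s u)" using spectral[OF herm] by blast
  have uu: "cinner u u = 1" and Au: "A *v u = complex_of_real (lam u) *s u" if "u \<in> S" for u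
    using es that by (auto simp: eigsys_def)
  have lampos: "lam u > 0" if "u \<in> S" for u
  proof -
    have "u \<noteq> 0" using uu[OF that] by auto
    hence "0 < Re (cinner u (A *v u))" using pd by (simp add: pos_def_def)
    thus ?thesis using uu[OF that] Au[OF that] by (simp add: cinner_scale_right)
  qed
  have ortho: "cinner w (\<Sum>u\<in>S. c u *s u) = c w" if "w \<in> S" for w c
  proof -
    have "cinner w (\<Sum>u\<in>S. c u *s u) = (\<Sum>u\<in>S. c u * cinner w u)"
      by (simp add: cinner_sum_right cinner_scale_right)
    also have "\<dots> = (\<Sum>u\<in>S. if w = u then c w else 0)"
      using es that by (intro sum.cong refl) (auto simp: eigsys_def)
    also have "\<dots> = c w" using fin that by simp
    finally show ?thesis .
  qed
  define s where "s u = complex_of_real (sqrt (lam u))" for u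
  define R where "R = (\<chi> a b. \<Sum>u\<in>S. s u * u$a * cnj (u$b))"
  have Rx: "R *v x = (\<Sum>u\<in>S. (s u * cinner u x) *s u)" for x
    unfolding R_def by (rule rank1_mv[OF fin])
  have Ax: "A *v x = (\<Sum>u\<in>S. (complex_of_real (lam u) * cinner u x) *s u)" for x
  proof -
    have "A *v x = A *v (\<Sum>u\<in>S. cinner u x *s u)" using comp by metis
    also have "\<dots> = (\<Sum>u\<in>S. (complex_of_real (lam u) * cinner u x) *s u)"
      by (simp add: vec.sum vector_scalar_commute Au vector_smult_assoc mult.commute cong: sum.cong)
    finally show ?thesis .
  qed
  have ss: "s u * s u = complex_of_real (lam u)" if "u \<in> S" for u
    using lampos[OF that] by (simp add: s_def flip: of_real_mult)
  have RR: "R ** R = A"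
  proof -
    { fix x
      have "(R ** R) *v x = R *v (R *v x)" by (simp add: matrix_vector_mul_assoc)
      also have "\<dots> = (\<Sum>w\<in>S. (s w * (s w * cinner w x)) *s w)"
        unfolding Rx[of "R *v x"] by (intro sum.cong refl) (simp add: Rx ortho)
      also have "\<dots> = A *v x" unfolding Ax
        by (intro sum.cong refl) (simp add: ss mult.assoc[symmetric])
      finally have "(R ** R) *v x = A *v x" . }
    thus ?thesis by (simp add: matrix_eq)
  qed
  have Rherm: "adj R = R"
    unfolding R_def adj_def vec_eq_iff by (simp add: cnj_sum s_def mult_ac)
  have Rpsd: "pos_semidef R"
  proof -
    { fix x
      have "cinner x (R *v x) = (\<Sum>u\<in>S. s u * cinner u x * cinner x u)"
        by (simp add: Rx cinner_sum_right cinner_scale_right)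
      also have "\<dots> = (\<Sum>u\<in>S. complex_of_real (sqrt (lam u) * (norm (cinner u x))^2))"
        unfolding s_def by (intro sum.cong refl) (simp only: cinner_sym[of x] mult.assoc complex_norm_square[symmetric] of_real_mult)
      also have "\<dots> = complex_of_real (\<Sum>u\<in>S. sqrt (lam u) * (norm (cinner u x))^2)"
        by simp
      finally have eq: "cinner x (R *v x) = complex_of_real (\<Sum>u\<in>S. sqrt (lam u) * (norm (cinner u x))^2)" .
      have "0 \<le> (\<Sum>u\<in>S. sqrt (lam u) * (norm (cinner u x))^2)"
        using lampos by (intro sum_nonneg mult_nonneg_nonneg) (auto simp: less_imp_le)
      hence "cinner x (R *v x) \<in> \<real> \<and> 0 \<le> Re (cinner x (R *v x))" unfolding eq by simp }
    thus ?thesis by (simp add: pos_semidef_def)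
  qed
  have uniq: "T = R" if T: "pos_semidef T" "T ** T = A" for T
  proof -
    have Tu: "T *v u = s u *s u" if u: "u \<in> S" for u
    proof -
      define y where "y = T *v u - s u *s u"
      have "T *v y = - (s u *s y)"
      proof -
        have "T *v y = (T ** T) *v u - s u *s (T *v u)"
          by (simp add: y_def matrix_vector_mult_diff_distrib vector_scalar_commute matrix_vector_mul_assoc)
        also have "\<dots> = (s u * s u) *s u - s u *s (T *v u)"
          using T(2) Au[OF u] ss[OF u] by simp
        also have "\<dots> = - (s u *s y)"
          by (simp add: y_def vector_ssub_ldistrib vector_smult_assoc)
        finally show ?thesis .
      qed
      hence "cinner y (T *v y) = - (s u * cinner y y)"
        by (simp add: cinner_neg_right cinner_scale_right)
      hence "Re (cinner y (T *v y)) = - (sqrt (lam u) * (norm y)^2)"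
        by (simp add: s_def cinner_self)
      moreover have "0 \<le> Re (cinner y (T *v y))" using T(1) by (simp add: pos_semidef_def)
      ultimately have "sqrt (lam u) * (norm y)^2 \<le> 0" by simp
      moreover have "sqrt (lam u) > 0" using lampos[OF u] by simp
      ultimately have "(norm y)^2 \<le> 0" by (simp add: mult_le_0_iff)
      hence "y = 0" by simp
      thus ?thesis by (simp add: y_def)
    qed
    { fix x
      have "T *v x = T *v (\<Sum>u\<in>S. cinner u x *s u)" using comp by metis
      also have "\<dots> = R *v x" unfolding Rx
        by (simp add: vec.sum vector_scalar_commute Tu vector_smult_assoc mult.commute cong: sum.cong)
      finally have "T *v x = R *v x" . }
    thus ?thesis by (simp add: matrix_eq)
  qed
  have "msqrt A = R" unfolding msqrt_def
    using Rpsd RR uniq by (intro the_equality) blast+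
  thus "msqrt A ** msqrt A = A" "adj (msqrt A) = msqrt A" using RR Rherm by auto
  have "invertible A" by (rule pd_invertible[OF pd])
  then obtain B where "B ** A = mat 1" using invertible_left_inverse by blast
  hence "(B ** msqrt A) ** msqrt A = mat 1"
    using \<open>msqrt A ** msqrt A = A\<close> by (metis matrix_mul_assoc)
  thus "invertible (msqrt A)" using invertible_left_inverse by blast
qed



lemma mm_add_left: "(A + B) ** C = A ** C + B ** (C::'n::finite cmat)"
  by (simp add: vec_eq_iff matrix_matrix_mult_def sum.distrib distrib_right)
lemma mm_add_right: "C ** (A + B) = C ** A + C ** (B::'n::finite cmat)"
  by (simp add: vec_eq_iff matrix_matrix_mult_def sum.distrib distrib_left)
lemma mm_scaleR_right: "(C::'n::finite cmat) ** (r *\<^sub>R A) = r *\<^sub>R (C ** (A::'n::finite cmat))"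
  unfolding scaleR_csmult csmult_mult_right ..

lemma alg_minimal: "star_algebra M \<Longrightarrow> S \<subseteq> M \<Longrightarrow> alg S \<subseteq> M"
  unfolding alg_def by blast

lemma alg_rho_props:
  "distorted_algebra r (alg_rho r S)" "S \<subseteq> alg_rho r S"
proof -
  show "S \<subseteq> alg_rho r S" unfolding alg_rho_def by blast
  show "distorted_algebra r (alg_rho r S)"
    unfolding distorted_algebra_def op_subspace_def alg_rho_def by blast
qed

lemma inv_closed:
  fixes M :: "'n::finite cmat set"
  assumes sub: "op_subspace M" and mul: "\<forall>X\<in>M. \<forall>Y\<in>M. X ** Y \<in> M"
    and sM: "s \<in> M" and inv: "invertible s"
  shows "matrix_inv s \<in> M"
proof -
  define t where "t = matrix_inv s"
  have st: "s ** t = mat 1" and ts: "t ** s = mat 1" using matrix_inv_props[OF inv] by (auto simp: t_def)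
  have subM: "subspace M" using sub unfolding subspace_def op_subspace_def
    by (auto simp: scaleR_csmult)
  define pw where "pw k = ((\<lambda>X. s ** X) ^^ k) s" for k
  have pwM: "pw k \<in> M" for k
    by (induction k) (auto simp: pw_def sM mul)
  define T where "T = range pw"
  define Sp where "Sp = span T"
  have SpM: "Sp \<subseteq> M" unfolding Sp_def using pwM subM
    by (intro span_minimal) (auto simp: T_def)
  define L where "L (X::'n cmat) = s ** X" for X
  have linL: "linear L"
    by (rule linearI) (simp_all add: L_def mm_add_right mm_scaleR_right)
  have Lpw: "L (pw k) = pw (Suc k)" for k by (simp add: L_def pw_def)
  have LT: "L ` T \<subseteq> T" unfolding T_def using Lpw by (auto simp del: funpow.simps)
  have LSp: "L ` Sp \<subseteq> Sp"
    unfolding Sp_def span_linear_image[OF linL, symmetric] using LT by (rule span_mono)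
  have injL: "inj_on L X" for X
  proof (rule inj_onI)
    fix a b assume "L a = L b"
    hence "t ** (s ** a) = t ** (s ** b)" by (simp add: L_def)
    thus "a = b" by (simp add: matrix_mul_assoc ts)
  qed
  have dimeq: "dim (L ` Sp) = dim Sp"
    by (rule dim_image_eq[OF linL injL])
  have subSp: "subspace Sp" unfolding Sp_def by (rule subspace_span)
  have subLSp: "subspace (L ` Sp)" unfolding Sp_def span_linear_image[OF linL, symmetric] by (rule subspace_span)
  have eq: "L ` Sp = Sp"
    by (rule subspace_dim_equal[OF subLSp subSp LSp]) (simp add: dimeq)
  have "s \<in> Sp" unfolding Sp_def T_def
    by (rule span_base) (rule range_eqI[of _ _ 0], simp add: pw_def)
  then obtain X where X: "X \<in> Sp" "s = s ** X" using eq by (metis imageE L_def)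
  have "X = mat 1"
  proof -
    have "t ** s = t ** (s ** X)" using X(2) by simp
    thus ?thesis by (simp add: matrix_mul_assoc ts)
  qed
  hence "mat 1 \<in> Sp" using X by simp
  then obtain Y where Y: "Y \<in> Sp" "mat 1 = s ** Y" using eq by (metis imageE L_def)
  have "Y = t"
  proof -
    have "t ** mat 1 = t ** (s ** Y)" using Y(2) by simp
    thus ?thesis by (simp add: matrix_mul_assoc ts)
  qed
  thus ?thesis using Y SpM t_def by auto
qed

lemma pull_star:
  fixes B :: "'n::finite cmat set"
  assumes sub: "op_subspace B" and adjB: "\<forall>X\<in>B. adj X \<in> B"
    and mulB: "\<forall>X\<in>B. \<forall>Y\<in>B. X ** (Pv ** Pv) ** Y \<in> B"
    and hP: "adj P = P" and PPv: "P ** Pv = mat 1" and PvP: "Pv ** P = mat 1"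
  shows "star_algebra {Y. P ** Y ** P \<in> B}"
proof -
  have r1: "X ** P ** Pv = X" for X by (metis PPv matrix_mul_assoc matrix_mul_rid)
  have r2: "X ** Pv ** P = X" for X by (metis PvP matrix_mul_assoc matrix_mul_rid)
  have prod: "P ** (Y1 ** Y2) ** P = (P ** Y1 ** P) ** (Pv ** Pv) ** (P ** Y2 ** P)" for Y1 Y2
    by (simp add: matrix_mul_assoc r1 r2)
  have adjr: "P ** adj Y ** P = adj (P ** Y ** P)" for Y
    by (simp add: adj_mult hP matrix_mul_assoc)
  show ?thesis
    unfolding star_algebra_def op_subspace_def
  proof (intro conjI ballI allI)
    show "0 \<in> {Y. P ** Y ** P \<in> B}" using sub by (simp add: op_subspace_def)
  next
    fix X Y assume "X \<in> {Y. P ** Y ** P \<in> B}" "Y \<in> {Y. P ** Y ** P \<in> B}"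
    thus "X + Y \<in> {Y. P ** Y ** P \<in> B}" using sub
      by (simp add: op_subspace_def mm_add_left mm_add_right)
  next
    fix c X assume "X \<in> {Y. P ** Y ** P \<in> B}"
    thus "csmult c X \<in> {Y. P ** Y ** P \<in> B}" using sub
      by (simp add: op_subspace_def csmult_mult_left csmult_mult_right)
  next
    fix X Y assume "X \<in> {Y. P ** Y ** P \<in> B}" "Y \<in> {Y. P ** Y ** P \<in> B}"
    thus "X ** Y \<in> {Y. P ** Y ** P \<in> B}" using mulB prod by simp
  next
    fix X assume "X \<in> {Y. P ** Y ** P \<in> B}"
    thus "adj X \<in> {Y. P ** Y ** P \<in> B}" using adjB adjr by simp
  qed
qed

theorem mainTheorem7:
  fixes V :: "'n::finite cmat set" and \<rho> \<sigma> :: "'n cmat"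
  assumes "op_subspace V"
    and "supp_set V = UNIV"
    and "pos_def \<rho>"
    and "compatible \<rho> (alg (Dinv \<rho> ` V))"
    and "pos_def \<sigma>"
    and "Dinv \<rho> \<sigma> \<in> alg (Dinv \<rho> ` V)"
  shows "alg (Dinv \<sigma> ` V) \<subseteq> Dinv \<sigma> ` alg_rho \<rho> V"
proof -
  note pdr = assms(3) and pds = assms(5)
  define P where "P = msqrt \<rho>"
  define Q where "Q = msqrt \<sigma>"
  define Pv where "Pv = matrix_inv P"
  define Qv where "Qv = matrix_inv Q"
  have PP: "P ** P = \<rho>" "adj P = P" "invertible P" using msqrt_props[OF pdr] by (auto simp: P_def)
  have QQ: "Q ** Q = \<sigma>" "adj Q = Q" "invertible Q" using msqrt_props[OF pds] by (auto simp: Q_def)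
  have PPv: "P ** Pv = mat 1" "Pv ** P = mat 1" unfolding Pv_def using matrix_inv_props[OF PP(3)] by simp_all
  have QQv: "Q ** Qv = mat 1" "Qv ** Q = mat 1" unfolding Qv_def using matrix_inv_props[OF QQ(3)] by simp_all
  have invr: "invertible \<rho>" and invs: "invertible \<sigma>" using pd_invertible pdr pds by auto
  have rP: "X ** P ** Pv = X" "X ** Pv ** P = X" "P ** (Pv ** X) = X" "Pv ** (P ** X) = X" for X
    by (metis PPv matrix_mul_assoc matrix_mul_rid matrix_mul_lid)+
  have rQ: "X ** Q ** Qv = X" "X ** Qv ** Q = X" "Q ** (Qv ** X) = X" "Qv ** (Q ** X) = X" for X
    by (metis QQv matrix_mul_assoc matrix_mul_rid matrix_mul_lid)+
  have ir: "matrix_inv \<rho> = Pv ** Pv"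
    by (rule inv_unique_left[symmetric, OF _ invr]) (simp add: PP(1)[symmetric] matrix_mul_assoc rP PPv)
  have is': "matrix_inv \<sigma> = Qv ** Qv"
    by (rule inv_unique_left[symmetric, OF _ invs]) (simp add: QQ(1)[symmetric] matrix_mul_assoc rQ QQv)
  define B where "B = alg_rho \<rho> V"
  have dB: "distorted_algebra \<rho> B" and VB: "V \<subseteq> B" unfolding B_def by (simp_all add: alg_rho_props)
  have subB: "op_subspace B" and adjB: "\<forall>X\<in>B. adj X \<in> B"
    and mulB: "\<forall>X\<in>B. \<forall>Y\<in>B. X ** (Pv ** Pv) ** Y \<in> B"
    using dB ir by (auto simp: distorted_algebra_def)
  define A' where "A' = {Y. P ** Y ** P \<in> B}"
  have sA': "star_algebra A'" unfolding A'_def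
    by (rule pull_star[OF subB adjB mulB PP(2) PPv])
  have "Dinv \<rho> ` V \<subseteq> A'" using VB
    by (auto simp: A'_def Dinv_def P_def[symmetric] Pv_def[symmetric] matrix_mul_assoc rP PPv)
  hence algA': "alg (Dinv \<rho> ` V) \<subseteq> A'" by (rule alg_minimal[OF sA'])
  define s where "s = Pv ** \<sigma> ** Pv"
  have sA: "s \<in> A'" using assms(6) algA'
    by (auto simp: s_def Dinv_def P_def[symmetric] Pv_def[symmetric])
  have invPv: "invertible Pv" using invertible_matrix_inv[OF PP(3)] by (simp add: Pv_def)
  have invss: "invertible s" unfolding s_def by (intro invertible_mult invPv invs)
  have tA: "matrix_inv s \<in> A'"
    using inv_closed[OF _ _ sA invss] sA' by (auto simp: star_algebra_def)
  have teq: "matrix_inv s = P ** matrix_inv \<sigma> ** P"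
  proof -
    have rs: "X ** \<sigma> ** matrix_inv \<sigma> = X" for X
      by (metis matrix_inv_props(1)[OF invs] matrix_mul_assoc matrix_mul_rid)
    have "s ** (P ** matrix_inv \<sigma> ** P) = mat 1"
      by (simp add: s_def matrix_mul_assoc rP rs PPv)
    thus ?thesis by (rule inv_unique_right[symmetric, OF _ invss])
  qed
  have key: "\<forall>X\<in>B. \<forall>Y\<in>B. X ** (Qv ** Qv) ** Y \<in> B"
  proof (intro ballI)
    fix X Y assume X: "X \<in> B" and Y: "Y \<in> B"
    have XA: "Pv ** X ** Pv \<in> A'" using X by (simp add: A'_def matrix_mul_assoc rP PPv)
    have YA: "Pv ** Y ** Pv \<in> A'" using Y by (simp add: A'_def matrix_mul_assoc rP PPv)
    have "(Pv ** X ** Pv) ** matrix_inv s ** (Pv ** Y ** Pv) \<in> A'"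
      using sA' XA YA tA by (simp add: star_algebra_def)
    hence "P ** ((Pv ** X ** Pv) ** matrix_inv s ** (Pv ** Y ** Pv)) ** P \<in> B"
      by (simp add: A'_def)
    moreover have "P ** ((Pv ** X ** Pv) ** matrix_inv s ** (Pv ** Y ** Pv)) ** P
        = X ** matrix_inv \<sigma> ** Y"
      by (simp add: teq matrix_mul_assoc rP PPv)
    ultimately show "X ** (Qv ** Qv) ** Y \<in> B" using is' by simp
  qed
  define C where "C = {Y. Q ** Y ** Q \<in> B}"
  have sC: "star_algebra C" unfolding C_def
    by (rule pull_star[OF subB adjB key QQ(2) QQv])
  have "Dinv \<sigma> ` V \<subseteq> C" using VB
    by (auto simp: C_def Dinv_def Q_def[symmetric] Qv_def[symmetric] matrix_mul_assoc rQ QQv)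
  hence "alg (Dinv \<sigma> ` V) \<subseteq> C" by (rule alg_minimal[OF sC])
  moreover have "C \<subseteq> Dinv \<sigma> ` B"
  proof
    fix Y assume "Y \<in> C"
    hence "Q ** Y ** Q \<in> B" by (simp add: C_def)
    moreover have "Y = Dinv \<sigma> (Q ** Y ** Q)"
      by (simp add: Dinv_def Q_def[symmetric] Qv_def[symmetric] matrix_mul_assoc rQ QQv)
    ultimately show "Y \<in> Dinv \<sigma> ` B" by blast
  qed
  ultimately show ?thesis by (simp add: B_def)
qed


end
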